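(* Let $n\ge 6$ and let $G$ be a $4$-Sachs minimal graph in $\mathfrak{G}_{n,2n-4}$. If $\Delta(G)=n-2$, then $G$ is the complete bipartite graph $K_{2,n-2}$.
   Context: $\mathfrak{G}_{n,m}$ is the set of connected simple graphs with $n$ vertices and $m$ edges. $\mathbf{a}_4(G)$ is the coefficient of $\lambda^{n-4}$ in $\det(\lambda\mathbf{I}-\mathbf{A}(G))$ (equivalently, number of 2-matchings minus twice the number of 4-cycles). $G\in\mathfrak{G}_{n,m}$ is $4$-Sachs minimal if $\mathbf{a}_4(G)=\min\{\mathbf{a}_4(H):H\in\mathfrak{G}_{n,m}\}$. $\Delta(G)$ is the maximum degree. *)

theory Defs
  imports Main
begin

definition simple_graph :: "'a set \<Rightarrow> 'a set set \<Rightarrow> bool" where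
  "simple_graph V E \<longleftrightarrow> finite V \<and>
     (\<forall>e\<in>E. \<exists>u v. u \<in> V \<and> v \<in> V \<and> u \<noteq> v \<and> e = {u, v})"

definition connected_graph :: "'a set \<Rightarrow> 'a set set \<Rightarrow> bool" where
  "connected_graph V E \<longleftrightarrow>
     (\<forall>u\<in>V. \<forall>v\<in>V. (u, v) \<in> {(x, y). {x, y} \<in> E}\<^sup>*)"

definition graph_class :: "nat \<Rightarrow> nat \<Rightarrow> 'a set \<Rightarrow> 'a set set \<Rightarrow> bool" where
  "graph_class n m V E \<longleftrightarrow> simple_graph V E \<and> connected_graph V E \<and>
     card V = n \<and> card E = m"

definition two_matchings :: "'a set set \<Rightarrow> 'a set set set" where
  "two_matchings E = {M. M \<subseteq> E \<and> card M = 2 \<and> (\<forall>e\<in>M. \<forall>f\<in>M. e \<noteq> f \<longrightarrow> e \<inter> f = {})}"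

definition four_cycles :: "'a set set \<Rightarrow> 'a set set set" where
  "four_cycles E = {C. C \<subseteq> E \<and> (\<exists>a b c d. distinct [a, b, c, d] \<and>
      C = {{a, b}, {b, c}, {c, d}, {d, a}})}"

definition a4 :: "'a set set \<Rightarrow> int" where
  "a4 E = int (card (two_matchings E)) - 2 * int (card (four_cycles E))"

definition sachs4_minimal :: "nat \<Rightarrow> nat \<Rightarrow> 'a set \<Rightarrow> 'a set set \<Rightarrow> bool" where
  "sachs4_minimal n m V E \<longleftrightarrow> graph_class n m V E \<and>
     (\<forall>(V' :: 'a set) E'. graph_class n m V' E' \<longrightarrow> a4 E \<le> a4 E')"

definition degree :: "'a set set \<Rightarrow> 'a \<Rightarrow> nat" where
  "degree E v = card {e \<in> E. v \<in> e}"

definition max_degree :: "'a set \<Rightarrow> 'a set set \<Rightarrow> nat" where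
  "max_degree V E = Max (degree E ` V)"

definition is_complete_bipartite :: "nat \<Rightarrow> nat \<Rightarrow> 'a set \<Rightarrow> 'a set set \<Rightarrow> bool" where
  "is_complete_bipartite p q V E \<longleftrightarrow> (\<exists>A B. A \<inter> B = {} \<and> A \<union> B = V \<and>
     card A = p \<and> card B = q \<and> E = {{a, b} | a b. a \<in> A \<and> b \<in> B})"

end

theory Submission
  imports Defs
begin

lemma card_two_le: "card {a,b} \<le> 2" by (cases "a = b") auto

lemma card_fiber_ge:
  assumes "finite T" "\<And>s. s \<in> S \<Longrightarrow> k \<le> card {t\<in>T. f t = s}"
  shows "k * card S \<le> card T"
proof (cases "finite S")
  case False then show ?thesis by simp
next
  case True
  have "k * card S = (\<Sum>s\<in>S. k)" by simp
  also have "\<dots> \<le> (\<Sum>s\<in>S. card {t\<in>T. f t = s})" by (rule sum_mono) (use assms in auto)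
  also have "\<dots> = card (\<Union>s\<in>S. {t\<in>T. f t = s})"
    by (rule card_UN_disjoint[symmetric]) (use True assms(1) in auto)
  also have "\<dots> \<le> card T" by (rule card_mono) (use assms(1) in auto)
  finally show ?thesis .
qed

lemma card_fiber_le:
  assumes "finite T" "\<And>t. t \<in> T \<Longrightarrow> card {t'\<in>T. f t' = f t} \<le> k"
  shows "card T \<le> k * card (f ` T)"
proof -
  have "T = (\<Union>s\<in>f ` T. {t\<in>T. f t = s})" by auto
  hence "card T = card (\<Union>s\<in>f ` T. {t\<in>T. f t = s})" by simp
  also have "\<dots> = (\<Sum>s\<in>f ` T. card {t\<in>T. f t = s})"
    by (rule card_UN_disjoint) (use assms(1) in auto)
  also have "\<dots> \<le> (\<Sum>s\<in>f ` T. k)" by (rule sum_mono) (use assms(2) in auto)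
  also have "\<dots> = k * card (f ` T)" by simp
  finally show ?thesis .
qed

lemma finite_two_matchings: "finite E \<Longrightarrow> finite (two_matchings E)"
proof -
  assume "finite E"
  moreover have "two_matchings E \<subseteq> Pow E" unfolding two_matchings_def by blast
  ultimately show ?thesis by (meson finite_Pow_iff finite_subset)
qed

lemma finite_four_cycles: "finite E \<Longrightarrow> finite (four_cycles E)"
proof -
  assume "finite E"
  moreover have "four_cycles E \<subseteq> Pow E" unfolding four_cycles_def by blast
  ultimately show ?thesis by (meson finite_Pow_iff finite_subset)
qed


definition is_cyc :: "'a set set \<Rightarrow> bool" where
  "is_cyc C \<longleftrightarrow> (\<exists>a b c d. distinct [a, b, c, d] \<and> C = {{a, b}, {b, c}, {c, d}, {d, a}})"

lemma four_cycles_alt: "four_cycles E = {C. C \<subseteq> E \<and> is_cyc C}"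
  unfolding four_cycles_def is_cyc_def by (rule refl)

lemma four_cycles_mono_avoid:
  assumes "C \<in> four_cycles E" "\<not> (\<exists>e\<in>C. w \<in> e)"
  shows "C \<in> four_cycles {e\<in>E. w \<notin> e}"
  using assms unfolding four_cycles_alt by blast

lemma cycles_split:
  assumes "finite E"
  shows "card (four_cycles E) \<le> card {C\<in>four_cycles E. \<exists>e\<in>C. w \<in> e} + card (four_cycles {e\<in>E. w \<notin> e})"
proof -
  let ?A = "{C\<in>four_cycles E. \<exists>e\<in>C. w \<in> e}"
  let ?B = "four_cycles {e\<in>E. w \<notin> e}"
  have sub: "four_cycles E \<subseteq> ?A \<union> ?B"
  proof
    fix C assume C: "C \<in> four_cycles E"
    show "C \<in> ?A \<union> ?B"
    proof (cases "\<exists>e\<in>C. w \<in> e")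
      case True then show ?thesis using C by simp
    next
      case False then show ?thesis using four_cycles_mono_avoid[OF C False] by simp
    qed
  qed
  have fA: "finite ?A" using finite_four_cycles[OF assms] by simp
  have fB: "finite ?B" by (rule finite_four_cycles) (use assms in simp)
  have "card (four_cycles E) \<le> card (?A \<union> ?B)"
    using sub fA fB by (simp add: card_mono)
  also have "card (?A \<union> ?B) \<le> card ?A + card ?B" by (rule card_Un_le)
  finally show ?thesis .
qed


lemma two_matchings_pair:
  assumes "e \<in> E" "f \<in> E" "e \<inter> f = {}" "e \<noteq> f"
  shows "{e, f} \<in> two_matchings E"
  unfolding two_matchings_def using assms by auto

lemma matchings_split:
  assumes "finite E"
  shows "card {(x,f). {w,x} \<in> E \<and> f \<in> E \<and> w \<notin> f \<and> x \<notin> f} + card (two_matchings {e\<in>E. w \<notin> e})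
         \<le> card (two_matchings E)"
proof -
  let ?P = "{(x,f). {w,x} \<in> E \<and> f \<in> E \<and> w \<notin> f \<and> x \<notin> f}"
  let ?h = "\<lambda>(x,f). {{w,x}, f}"
  let ?M = "two_matchings E"
  let ?M' = "two_matchings {e\<in>E. w \<notin> e}"
  have inj: "inj_on ?h ?P"
  proof (rule inj_onI)
    fix p q assume p: "p \<in> ?P" and q: "q \<in> ?P" and eq: "?h p = ?h q"
    obtain x f where pp: "p = (x,f)" by (cases p)
    obtain x' f' where qq: "q = (x',f')" by (cases q)
    from p q have wf: "w \<notin> f" "w \<notin> f'" by (simp_all add: pp qq)
    from eq have eq': "{{w,x}, f} = {{w,x'}, f'}" by (simp add: pp qq)
    have "{w,x} \<noteq> f'" using wf by auto
    hence "{w,x} = {w,x'}" using eq' by (metis insertCI insertE singletonD)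
    moreover have "{w,x'} \<noteq> f" using wf by auto
    hence "f = f'" using eq' by (metis insertCI insertE singletonD)
    ultimately show "p = q" unfolding pp qq by (auto simp: doubleton_eq_iff)
  qed
  have sub: "?h ` ?P \<subseteq> ?M - ?M'"
  proof
    fix M assume "M \<in> ?h ` ?P"
    then obtain x f where xf: "{w,x} \<in> E" "f \<in> E" "w \<notin> f" "x \<notin> f" and M: "M = {{w,x},f}" by auto
    have ne: "{w,x} \<noteq> f" using xf by auto
    have dj: "{w,x} \<inter> f = {}" using xf by auto
    have "M \<in> ?M" unfolding M by (rule two_matchings_pair) (use xf ne dj in auto)
    moreover have "M \<notin> ?M'" unfolding two_matchings_def M by auto
    ultimately show "M \<in> ?M - ?M'" by simp
  qed
  have fin: "finite ?M" using assms by (rule finite_two_matchings)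
  have sub2: "?M' \<subseteq> ?M" unfolding two_matchings_def by auto
  have "card ?P = card (?h ` ?P)" using inj by (simp add: card_image)
  also have "\<dots> \<le> card (?M - ?M')" using fin sub by (simp add: card_mono)
  also have "\<dots> = card ?M - card ?M'"
    using sub2 fin by (simp add: card_Diff_subset finite_subset)
  finally show ?thesis using card_mono[OF fin sub2] by linarith
qed


definition cyc :: "'a \<Rightarrow> 'a \<Rightarrow> 'a \<Rightarrow> 'a \<Rightarrow> 'a set set" where
  "cyc a b c d = {{a,b},{b,c},{c,d},{d,a}}"

lemma cyc_rot: "cyc a b c d = cyc b c d a"
  unfolding cyc_def by auto
lemma cyc_rev: "cyc a b c d = cyc a d c b"
  unfolding cyc_def by auto

lemma is_cyc_cyc: "is_cyc C \<longleftrightarrow> (\<exists>a b c d. distinct [a,b,c,d] \<and> C = cyc a b c d)"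
  unfolding is_cyc_def cyc_def by (rule refl)

definition triples_w :: "'a set set \<Rightarrow> 'a \<Rightarrow> ('a \<times> 'a \<times> 'a) set" where
  "triples_w E w = {(x,y,z). x \<noteq> w \<and> y \<noteq> w \<and> z \<noteq> w \<and> x \<noteq> y \<and> x \<noteq> z \<and> y \<noteq> z \<and>
      {w,x} \<in> E \<and> {x,y} \<in> E \<and> {y,z} \<in> E \<and> {z,w} \<in> E}"

lemma finite_triples_w:
  assumes "finite V" "\<forall>e\<in>E. e \<subseteq> V"
  shows "finite (triples_w E w)"
proof -
  have "triples_w E w \<subseteq> V \<times> V \<times> V" unfolding triples_w_def using assms(2) by auto
  then show ?thesis using assms(1) by (metis finite_SigmaI finite_subset)
qed

lemma cycle_at_first:
  assumes "distinct [a,b,c,d]" "cyc a b c d \<subseteq> E"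
  shows "(b,c,d) \<in> triples_w E a \<and> (d,c,b) \<in> triples_w E a \<and> (b,c,d) \<noteq> (d,c,b)
     \<and> cyc a b c d = cyc a d c b"
proof -
  have e: "{a,b} \<in> E" "{b,c} \<in> E" "{c,d} \<in> E" "{d,a} \<in> E" using assms(2) unfolding cyc_def by auto
  have s: "{b,a} = {a,b}" "{c,b} = {b,c}" "{d,c} = {c,d}" "{a,d} = {d,a}" by auto
  have "(b,c,d) \<in> triples_w E a" using e assms(1) s unfolding triples_w_def by auto
  moreover have "(d,c,b) \<in> triples_w E a" using e assms(1) unfolding triples_w_def by (auto simp: s)
  ultimately show ?thesis using assms(1) cyc_rev[of a b c d] by simp
qed

lemma cycles_through:
  assumes "finite V" "\<forall>e\<in>E. e \<subseteq> V"
  shows "2 * card {C\<in>four_cycles E. \<exists>e\<in>C. w \<in> e} \<le> card (triples_w E w)"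
proof (rule card_fiber_ge[where f = "\<lambda>(x,y,z). cyc w x y z"])
  show "finite (triples_w E w)" using assms by (rule finite_triples_w)
next
  fix C assume "C \<in> {C\<in>four_cycles E. \<exists>e\<in>C. w \<in> e}"
  hence C0: "C \<subseteq> E" "is_cyc C" "\<exists>e\<in>C. w \<in> e" unfolding four_cycles_alt by simp_all
  then obtain a b c d where dist: "distinct [a,b,c,d]" and C: "C = cyc a b c d"
    unfolding is_cyc_cyc by blast
  have CE: "C \<subseteq> E" by (rule C0)
  have "w \<in> {a,b,c,d}" using C0(3) C unfolding cyc_def by auto
  then obtain x y z where xyz: "distinct [w,x,y,z]" "C = cyc w x y z"
  proof (elim insertE)
    assume w: "w = a"
    have "distinct [w,b,c,d]" using dist w by simp
    moreover have "C = cyc w b c d" using C w by simp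
    ultimately show ?thesis by (rule that)
  next
    assume w: "w = b"
    have "distinct [w,c,d,a]" using dist w by auto
    moreover have "C = cyc w c d a" using C w cyc_rot[of a b c d] by simp
    ultimately show ?thesis by (rule that)
  next
    assume w: "w = c"
    have "distinct [w,d,a,b]" using dist w by auto
    moreover have "C = cyc w d a b" using C w cyc_rot[of a b c d] cyc_rot[of b c d a] by simp
    ultimately show ?thesis by (rule that)
  next
    assume w: "w = d"
    have "distinct [w,a,b,c]" using dist w by auto
    moreover have "C = cyc w a b c" using C w cyc_rot[of a b c d] cyc_rot[of b c d a] cyc_rot[of c d a b] by simp
    ultimately show ?thesis by (rule that)
  next
    assume "w \<in> {}" then show ?thesis by simp
  qed
  have CE': "cyc w x y z \<subseteq> E" using CE xyz(2) by simp
  note h0 = cycle_at_first[OF xyz(1) CE']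
  have h: "(x,y,z) \<in> triples_w E w" "(z,y,x) \<in> triples_w E w" "(x,y,z) \<noteq> (z,y,x)" "C = cyc w z y x"
    using h0 xyz(2) by simp_all
  let ?F = "{t\<in>triples_w E w. (\<lambda>(x,y,z). cyc w x y z) t = C}"
  have "{(x,y,z),(z,y,x)} \<subseteq> ?F"
    using h xyz(2) by simp
  moreover have "finite ?F"
    using finite_triples_w[OF assms] by simp
  ultimately have "card {(x,y,z),(z,y,x)} \<le> card ?F"
    by (simp add: card_mono)
  then show "2 \<le> card ?F" using h(3) by simp
qed


lemma pair_pair_eq:
  assumes "{{a',b'},{c',d'}} = {{a,b},{c,d}}"
  shows "(a',b',c',d') \<in> set [(a,b,c,d),(b,a,c,d),(a,b,d,c),(b,a,d,c),(c,d,a,b),(d,c,a,b),(c,d,b,a),(d,c,b,a)]"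
proof -
  from assms have "({a',b'} = {a,b} \<and> {c',d'} = {c,d}) \<or> ({a',b'} = {c,d} \<and> {c',d'} = {a,b})"
    by (simp add: doubleton_eq_iff)
  then show ?thesis
  proof
    assume h: "{a',b'} = {a,b} \<and> {c',d'} = {c,d}"
    then have "(a' = a \<and> b' = b \<or> a' = b \<and> b' = a)" "(c' = c \<and> d' = d \<or> c' = d \<and> d' = c)"
      by (auto simp: doubleton_eq_iff)
    then show ?thesis by auto
  next
    assume h: "{a',b'} = {c,d} \<and> {c',d'} = {a,b}"
    then have "(a' = c \<and> b' = d \<or> a' = d \<and> b' = c)" "(c' = a \<and> d' = b \<or> c' = b \<and> d' = a)"
      by (auto simp: doubleton_eq_iff)
    then show ?thesis by auto
  qed
qed

definition TC :: "'a set set \<Rightarrow> ('a \<times> 'a \<times> 'a \<times> 'a) set" where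
  "TC E = {(a,b,c,d). distinct [a,b,c,d] \<and> cyc a b c d \<subseteq> E}"
definition TM :: "'a set set \<Rightarrow> ('a \<times> 'a \<times> 'a \<times> 'a) set" where
  "TM E = {(a,b,c,d). distinct [a,b,c,d] \<and> {a,b} \<in> E \<and> {c,d} \<in> E}"

lemma finite_TM:
  assumes "finite V" "\<forall>e\<in>E. e \<subseteq> V"
  shows "finite (TM E)"
proof -
  have "TM E \<subseteq> V \<times> V \<times> V \<times> V" unfolding TM_def using assms(2) by auto
  then show ?thesis using assms(1) by (metis finite_SigmaI finite_subset)
qed

lemma TC_sub_TM: "TC E \<subseteq> TM E"
  unfolding TC_def TM_def cyc_def by auto

lemma TM_le_matchings:
  assumes "finite V" "\<forall>e\<in>E. e \<subseteq> V" "finite E"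
  shows "card (TM E) \<le> 8 * card (two_matchings E)"
proof -
  let ?g = "\<lambda>(a,b,c,d). {{a,b},{c,d}}"
  have "card (TM E) \<le> 8 * card (?g ` TM E)"
  proof (rule card_fiber_le)
    show "finite (TM E)" using assms(1,2) by (rule finite_TM)
  next
    fix t assume t: "t \<in> TM E"
    obtain a b c d where tt: "t = (a,b,c,d)" by (cases t) auto
    let ?L = "[(a,b,c,d),(b,a,c,d),(a,b,d,c),(b,a,d,c),(c,d,a,b),(d,c,a,b),(c,d,b,a),(d,c,b,a)]"
    have "{t'\<in>TM E. ?g t' = ?g t} \<subseteq> set ?L"
    proof
      fix t' assume "t' \<in> {t'\<in>TM E. ?g t' = ?g t}"
      then have eq: "?g t' = ?g t" by simp
      obtain a' b' c' d' where tt': "t' = (a',b',c',d')" by (cases t') auto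
      from eq have "{{a',b'},{c',d'}} = {{a,b},{c,d}}" by (simp add: tt tt')
      then show "t' \<in> set ?L" unfolding tt' by (rule pair_pair_eq)
    qed
    then have "card {t'\<in>TM E. ?g t' = ?g t} \<le> card (set ?L)" by (simp add: card_mono)
    also have "\<dots> \<le> length ?L" by (rule card_length)
    finally show "card {t'\<in>TM E. ?g t' = ?g t} \<le> 8" by simp
  qed
  also have "card (?g ` TM E) \<le> card (two_matchings E)"
  proof (rule card_mono)
    show "finite (two_matchings E)" using assms(3) by (rule finite_two_matchings)
  next
    show "?g ` TM E \<subseteq> two_matchings E"
    proof
      fix M assume "M \<in> ?g ` TM E"
      then obtain a b c d where "distinct [a,b,c,d]" "{a,b} \<in> E" "{c,d} \<in> E" and M: "M = {{a,b},{c,d}}"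
        unfolding TM_def by auto
      then show "M \<in> two_matchings E" unfolding M
        by (intro two_matchings_pair) (auto simp: doubleton_eq_iff)
    qed
  qed
  finally show ?thesis by simp
qed

lemma cycles_le_TC:
  assumes "finite V" "\<forall>e\<in>E. e \<subseteq> V"
  shows "8 * card (four_cycles E) \<le> card (TC E)"
proof (rule card_fiber_ge[where f = "\<lambda>(a,b,c,d). cyc a b c d"])
  show "finite (TC E)" using finite_TM[OF assms] TC_sub_TM by (rule finite_subset[rotated])
next
  fix C assume "C \<in> four_cycles E"
  hence C0: "C \<subseteq> E" "is_cyc C" unfolding four_cycles_alt by simp_all
  then obtain a b c d where dist: "distinct [a,b,c,d]" and C: "C = cyc a b c d"
    unfolding is_cyc_cyc by blast
  let ?L = "[(a,b,c,d),(b,c,d,a),(c,d,a,b),(d,a,b,c),(a,d,c,b),(d,c,b,a),(c,b,a,d),(b,a,d,c)]"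
  let ?F = "{t\<in>TC E. (\<lambda>(a,b,c,d). cyc a b c d) t = C}"
  have cy: "cyc b c d a = C" "cyc c d a b = C" "cyc d a b c = C" "cyc a d c b = C"
     "cyc d c b a = C" "cyc c b a d = C" "cyc b a d c = C"
    unfolding C cyc_def by auto
  have "set ?L \<subseteq> ?F"
    using dist cy C0(1) unfolding TC_def C by auto
  moreover have "finite ?F"
    using finite_TM[OF assms] TC_sub_TM by (metis (no_types, lifting) finite_subset mem_Collect_eq subsetI)
  ultimately have "card (set ?L) \<le> card ?F" by (simp add: card_mono)
  moreover have "card (set ?L) = 8"
    using dist by (simp add: card_insert_if)
  ultimately show "8 \<le> card ?F" by simp
qed

lemma cycles_le_matchings:
  assumes "finite V" "\<forall>e\<in>E. e \<subseteq> V" "finite E"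
  shows "card (four_cycles E) \<le> card (two_matchings E)"
proof -
  have "8 * card (four_cycles E) \<le> card (TC E)" using assms(1,2) by (rule cycles_le_TC)
  also have "\<dots> \<le> card (TM E)" using finite_TM[OF assms(1,2)] TC_sub_TM by (rule card_mono)
  also have "\<dots> \<le> 8 * card (two_matchings E)" using assms by (rule TM_le_matchings)
  finally show ?thesis by simp
qed


definition cherries :: "'a set set \<Rightarrow> ('a \<times> 'a \<times> 'a) set" where
  "cherries E = {(x,y,z). x \<noteq> z \<and> {x,y} \<in> E \<and> {y,z} \<in> E}"

lemma finite_cherries:
  assumes "finite V" "\<forall>e\<in>E. e \<subseteq> V"
  shows "finite (cherries E)"
proof -
  have "cherries E \<subseteq> V \<times> V \<times> V" unfolding cherries_def using assms(2) by auto
  then show ?thesis using assms(1) by (metis finite_SigmaI finite_subset)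
qed

lemma card_distinct_pairs:
  assumes "finite E"
  shows "card {(e,f). e \<in> E \<and> f \<in> E \<and> e \<noteq> f} = card E * card E - card E"
proof -
  have eq: "{(e,f). e \<in> E \<and> f \<in> E \<and> e \<noteq> f} = E \<times> E - (\<lambda>e. (e,e)) ` E" by auto
  have sub: "(\<lambda>e. (e,e)) ` E \<subseteq> E \<times> E" by auto
  have "card ((\<lambda>e. (e,e)) ` E) = card E" by (rule card_image) (auto intro: inj_onI)
  then show ?thesis unfolding eq using sub assms
    by (simp add: card_Diff_subset card_cartesian_product finite_subset)
qed

lemma cherries_matchings:
  assumes "finite V" "\<forall>e\<in>E. e \<subseteq> V" "finite E"
    and simple: "\<forall>e\<in>E. \<exists>x y. x \<noteq> y \<and> e = {x,y}"
  shows "card (cherries E) + 2 * card (two_matchings E) \<le> card E * card E - card E"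
proof -
  let ?DP = "{(e,f). e \<in> E \<and> f \<in> E \<and> e \<noteq> f}"
  let ?A1 = "{p\<in>?DP. fst p \<inter> snd p = {}}"
  let ?A2 = "{p\<in>?DP. fst p \<inter> snd p \<noteq> {}}"
  have subEE: "?DP \<subseteq> E \<times> E" by blast
  have finDP: "finite ?DP" using finite_subset[OF subEE] assms(3) by simp
  have un: "?DP = ?A1 \<union> ?A2" by blast
  have f1: "finite ?A1" using finDP by simp
  have f2: "finite ?A2" using finDP by simp
  have dj: "?A1 \<inter> ?A2 = {}" by blast
  have c1: "card (?A1 \<union> ?A2) = card ?A1 + card ?A2"
    using f1 f2 dj by (rule card_Un_disjoint)
  have "card ?DP = card (?A1 \<union> ?A2)" using un by (rule arg_cong)
  with c1 have "card ?DP = card ?A1 + card ?A2" by (rule trans[rotated])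
  moreover have "card ?DP = card E * card E - card E" using assms(3) by (rule card_distinct_pairs)
  moreover have "card (cherries E) \<le> card ?A2"
  proof -
    let ?h = "\<lambda>(x,y,z). ({x,y},{y,z})"
    have ne: "\<And>x y. {x,y} \<in> E \<Longrightarrow> x \<noteq> y"
    proof -
      fix x y assume "{x,y} \<in> E"
      then obtain p q where "p \<noteq> q" "{x,y} = {p,q}" using simple by blast
      then show "x \<noteq> y" by (auto simp: doubleton_eq_iff)
    qed
    have inter: "\<And>x y z. x \<noteq> z \<Longrightarrow> x \<noteq> y \<Longrightarrow> y \<noteq> z \<Longrightarrow> {x,y} \<inter> {y,z} = {y}" by auto
    have inj: "inj_on ?h (cherries E)"
    proof (rule inj_onI)
      fix p q assume p: "p \<in> cherries E" and q: "q \<in> cherries E" and eq: "?h p = ?h q"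
      obtain x y z where pp: "p = (x,y,z)" by (cases p) auto
      obtain x' y' z' where qq: "q = (x',y',z')" by (cases q) auto
      from p have p1: "x \<noteq> z" "x \<noteq> y" "y \<noteq> z" using ne unfolding pp cherries_def by auto
      from q have q1: "x' \<noteq> z'" "x' \<noteq> y'" "y' \<noteq> z'" using ne unfolding qq cherries_def by auto
      from eq have e1: "{x,y} = {x',y'}" "{y,z} = {y',z'}" by (simp_all add: pp qq)
      have "{y} = {y'}" using inter[OF p1] inter[OF q1] e1 by simp
      hence yy: "y = y'" by simp
      have "x = x'" using e1(1) yy p1 by (auto simp: doubleton_eq_iff)
      moreover have "z = z'" using e1(2) yy p1 by (auto simp: doubleton_eq_iff)
      ultimately show "p = q" using yy pp qq by simp
    qed
    have sub: "?h ` cherries E \<subseteq> ?A2"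
    proof
      fix r assume "r \<in> ?h ` cherries E"
      then obtain x y z where c: "x \<noteq> z" "{x,y} \<in> E" "{y,z} \<in> E" and r: "r = ({x,y},{y,z})"
        unfolding cherries_def by auto
      have "{x,y} \<noteq> {y,z}" using c(1) by (auto simp: doubleton_eq_iff)
      then show "r \<in> ?A2" using c r by auto
    qed
    have fA2: "finite ?A2" using finDP by simp
    have "card (cherries E) = card (?h ` cherries E)" using inj by (simp add: card_image)
    also have "\<dots> \<le> card ?A2" using sub fA2 by (simp add: card_mono)
    finally show ?thesis .
  qed
  moreover have "2 * card (two_matchings E) \<le> card ?A1"
  proof (rule card_fiber_ge[where f = "\<lambda>(e,f). {e,f}"])
    show "finite ?A1" using finDP by simp
  next
    fix M assume "M \<in> two_matchings E"
    hence M: "M \<subseteq> E" "card M = 2" "\<forall>e\<in>M. \<forall>f\<in>M. e \<noteq> f \<longrightarrow> e \<inter> f = {}"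
      unfolding two_matchings_def by simp_all
    then obtain e f where ef: "e \<noteq> f" "M = {e,f}" by (auto simp: card_2_iff)
    have "e \<inter> f = {}" "f \<inter> e = {}" using M(3) ef by auto
    moreover have "e \<in> E" "f \<in> E" using M(1) ef by auto
    ultimately have "{(e,f),(f,e)} \<subseteq> {t\<in>?A1. (\<lambda>(e,f). {e,f}) t = M}" using ef by auto
    moreover have "finite {t\<in>?A1. (\<lambda>(e,f). {e,f}) t = M}" using finDP by simp
    ultimately have "card {(e,f),(f,e)} \<le> card {t\<in>?A1. (\<lambda>(e,f). {e,f}) t = M}"
      by (rule card_mono[rotated])
    then show "2 \<le> card {t\<in>?A1. (\<lambda>(e,f). {e,f}) t = M}" using ef by simp
  qed
  ultimately show ?thesis by linarith
qed


definition KE :: "'a \<Rightarrow> 'a \<Rightarrow> 'a set \<Rightarrow> 'a set set" where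
  "KE v u N = {{a,b} | a b. a \<in> {v,u} \<and> b \<in> N}"

lemma K_facts:
  assumes finV: "finite V" and vV: "v \<in> V" and uV: "u \<in> V" and vu: "v \<noteq> u"
    and NV: "N \<subseteq> V" and vN: "v \<notin> N" and uN: "u \<notin> N" and Vdec: "V = {v,u} \<union> N"
    and Nne: "N \<noteq> {}"
  shows "graph_class (card N + 2) (2 * card N) V (KE v u N)" and "a4 (KE v u N) \<le> 0"
proof -
  let ?E = "KE v u N"
  have finN: "finite N" using finV NV by (rule finite_subset[rotated])
  have memE: "\<And>e. e \<in> ?E \<longleftrightarrow> (\<exists>a b. a \<in> {v,u} \<and> b \<in> N \<and> e = {a,b})"
    unfolding KE_def by blast
  have edge_v: "\<And>b. b \<in> N \<Longrightarrow> {v,b} \<in> ?E" using memE by blast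
  have edge_u: "\<And>b. b \<in> N \<Longrightarrow> {u,b} \<in> ?E" using memE by blast
  have simple: "simple_graph V ?E"
    unfolding simple_graph_def
  proof (intro conjI ballI)
    show "finite V" by (rule finV)
  next
    fix e assume "e \<in> ?E"
    then obtain a b where ab: "a \<in> {v,u}" "b \<in> N" "e = {a,b}" using memE by blast
    have "a \<in> V" using ab(1) vV uV by auto
    moreover have "b \<in> V" using ab(2) NV by auto
    moreover have "a \<noteq> b" using ab vN uN by auto
    ultimately show "\<exists>x y. x \<in> V \<and> y \<in> V \<and> x \<noteq> y \<and> e = {x, y}" using ab(3) by blast
  qed
  let ?R = "{(x, y). {x, y} \<in> ?E}"
  obtain b0 where b0: "b0 \<in> N" using Nne by blast
  have toV: "\<And>x. x \<in> V \<Longrightarrow> (x, v) \<in> ?R\<^sup>* \<and> (v, x) \<in> ?R\<^sup>*"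
  proof -
    fix x assume "x \<in> V"
    hence "x = v \<or> x = u \<or> x \<in> N" using Vdec by auto
    then show "(x, v) \<in> ?R\<^sup>* \<and> (v, x) \<in> ?R\<^sup>*"
    proof (elim disjE)
      assume "x = v" then show ?thesis by simp
    next
      assume xu: "x = u"
      have e1: "{v,b0} \<in> ?E" "{u,b0} \<in> ?E" using edge_v edge_u b0 by auto
      have "(v,b0) \<in> ?R" "(b0,v) \<in> ?R" "(u,b0) \<in> ?R" "(b0,u) \<in> ?R"
        using e1 by (simp_all add: insert_commute)
      then show ?thesis unfolding xu
        by (meson converse_rtrancl_into_rtrancl r_into_rtrancl)
    next
      assume xN: "x \<in> N"
      have e1: "{v,x} \<in> ?E" using edge_v xN by auto
      have "(v,x) \<in> ?R" "(x,v) \<in> ?R" using e1 by (simp_all add: insert_commute)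
      then show ?thesis by auto
    qed
  qed
  have conn: "connected_graph V ?E"
    unfolding connected_graph_def
  proof (intro ballI)
    fix x y assume "x \<in> V" "y \<in> V"
    then show "(x, y) \<in> ?R\<^sup>*" using toV by (meson rtrancl_trans)
  qed
  have cardV: "card V = card N + 2"
  proof -
    have "card V = card ({v,u} \<union> N)" using Vdec by simp
    also have "\<dots> = card {v,u} + card N" by (rule card_Un_disjoint) (use finN vN uN in auto)
    finally show ?thesis using vu by simp
  qed
  let ?f = "\<lambda>(a,b). {a,b}"
  have Eimg: "?E = ?f ` ({v,u} \<times> N)" unfolding KE_def by auto
  have injf: "inj_on ?f ({v,u} \<times> N)"
  proof (rule inj_onI)
    fix p q assume p: "p \<in> {v,u} \<times> N" and q: "q \<in> {v,u} \<times> N" and eq: "?f p = ?f q"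
    obtain a b where pp: "p = (a,b)" by (cases p)
    obtain a' b' where qq: "q = (a',b')" by (cases q)
    from eq have "{a,b} = {a',b'}" by (simp add: pp qq)
    moreover have "a \<noteq> b'" "a' \<noteq> b" using p q vN uN by (auto simp: pp qq)
    ultimately show "p = q" unfolding pp qq by (auto simp: doubleton_eq_iff)
  qed
  have cardE: "card ?E = 2 * card N"
    unfolding Eimg using injf vu by (simp add: card_image card_cartesian_product)
  show "graph_class (card N + 2) (2 * card N) V ?E"
    unfolding graph_class_def using simple conn cardV cardE by simp
  have finE: "finite ?E" unfolding Eimg using finN by simp
  let ?PN = "{(x,y). x \<in> N \<and> y \<in> N \<and> x \<noteq> y}"
  have subPN: "?PN \<subseteq> N \<times> N" by blast
  have finPN: "finite ?PN" using finite_subset[OF subPN] finN by simp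
  have M_sub: "two_matchings ?E \<subseteq> (\<lambda>(x,y). {{v,x},{u,y}}) ` ?PN"
  proof
    fix M assume "M \<in> two_matchings ?E"
    hence M: "M \<subseteq> ?E" "card M = 2" "\<forall>e\<in>M. \<forall>f\<in>M. e \<noteq> f \<longrightarrow> e \<inter> f = {}"
      unfolding two_matchings_def by simp_all
    then obtain e f where ef: "e \<noteq> f" "M = {e,f}" by (auto simp: card_2_iff)
    have dj: "e \<inter> f = {}" using M(3) ef by auto
    have "e \<in> ?E" "f \<in> ?E" using M(1) ef by auto
    then obtain a b a' b' where ab: "a \<in> {v,u}" "b \<in> N" "e = {a,b}" and ab': "a' \<in> {v,u}" "b' \<in> N" "f = {a',b'}"
      using memE by meson
    have "a \<noteq> a'" "b \<noteq> b'" using dj ab ab' by auto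
    then have "(a = v \<and> a' = u) \<or> (a = u \<and> a' = v)" using ab(1) ab'(1) by auto
    then show "M \<in> (\<lambda>(x,y). {{v,x},{u,y}}) ` ?PN"
    proof
      assume "a = v \<and> a' = u"
      then have "M = (\<lambda>(x,y). {{v,x},{u,y}}) (b,b')" using ef ab ab' by simp
      moreover have "(b,b') \<in> ?PN" using ab ab' \<open>b \<noteq> b'\<close> by simp
      ultimately show ?thesis by blast
    next
      assume "a = u \<and> a' = v"
      then have "M = {{u,b},{v,b'}}" using ef ab ab' by simp
      also have "\<dots> = {{v,b'},{u,b}}" by (rule insert_commute)
      finally have "M = (\<lambda>(x,y). {{v,x},{u,y}}) (b',b)" by simp
      moreover have "(b',b) \<in> ?PN" using ab ab' \<open>b \<noteq> b'\<close> by simp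
      ultimately show ?thesis by blast
    qed
  qed
  have cM: "card (two_matchings ?E) \<le> card ?PN"
    using card_mono[OF finite_imageI[OF finPN] M_sub] card_image_le[OF finPN, of "\<lambda>(x,y). {{v,x},{u,y}}"] by linarith
  let ?g = "\<lambda>(x,y). cyc v x u y"
  have g_sub: "?g ` ?PN \<subseteq> four_cycles ?E"
  proof
    fix C assume "C \<in> ?g ` ?PN"
    then obtain x y where xy: "x \<in> N" "y \<in> N" "x \<noteq> y" and C: "C = cyc v x u y" by auto
    have "{v,x} \<in> ?E" "{x,u} \<in> ?E" "{u,y} \<in> ?E" "{y,v} \<in> ?E"
    proof -
      have s: "{x,u} = {u,x}" "{y,v} = {v,y}" by auto
      show "{v,x} \<in> ?E" "{x,u} \<in> ?E" "{u,y} \<in> ?E" "{y,v} \<in> ?E"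
        using edge_v edge_u xy unfolding s by simp_all
    qed
    hence "C \<subseteq> ?E" unfolding C cyc_def by simp
    moreover have dist: "distinct [v,x,u,y]" using xy vN uN vu by auto
    have "is_cyc C" unfolding is_cyc_cyc
      by (rule exI[of _ v], rule exI[of _ x], rule exI[of _ u], rule exI[of _ y]) (simp only: dist C simp_thms)
    ultimately show "C \<in> four_cycles ?E" unfolding four_cycles_alt by simp
  qed
  have "card ?PN \<le> 2 * card (?g ` ?PN)"
  proof (rule card_fiber_le)
    show "finite ?PN" by (rule finPN)
  next
    fix t assume t: "t \<in> ?PN"
    obtain x y where tt: "t = (x,y)" by (cases t)
    have xy: "x \<in> N" "y \<in> N" "x \<noteq> y" using t tt by auto
    have "{t'\<in>?PN. ?g t' = ?g t} \<subseteq> {(x,y),(y,x)}"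
    proof
      fix t' assume t': "t' \<in> {t'\<in>?PN. ?g t' = ?g t}"
      obtain x' y' where tt': "t' = (x',y')" by (cases t')
      have xy': "x' \<in> N" "y' \<in> N" "x' \<noteq> y'" using t' tt' by auto
      have eq: "cyc v x' u y' = cyc v x u y" using t' tt tt' by simp
      have U: "\<And>a b c d. \<Union>(cyc a b c d) = {a,b,c,d}" unfolding cyc_def by auto
      have "x' \<in> \<Union>(cyc v x' u y')" "y' \<in> \<Union>(cyc v x' u y')" unfolding U by simp_all
      hence "x' \<in> {v,x,u,y}" "y' \<in> {v,x,u,y}" unfolding eq U by simp_all
      moreover have "x' \<noteq> v" "x' \<noteq> u" "y' \<noteq> v" "y' \<noteq> u" using xy' vN uN by auto
      ultimately have h1: "x' = x \<or> x' = y" and h2: "y' = x \<or> y' = y" by auto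
      have "(x' = x \<and> y' = y) \<or> (x' = y \<and> y' = x)" using h1 h2 xy'(3) by blast
      then show "t' \<in> {(x,y),(y,x)}" using tt' by auto
    qed
    hence "card {t'\<in>?PN. ?g t' = ?g t} \<le> card {(x,y),(y,x)}" by (rule card_mono[rotated]) simp
    also have "\<dots> \<le> 2" by (rule card_two_le)
    finally show "card {t'\<in>?PN. ?g t' = ?g t} \<le> 2" .
  qed
  also have "card (?g ` ?PN) \<le> card (four_cycles ?E)"
    by (rule card_mono[OF finite_four_cycles[OF finE] g_sub])
  finally have cC: "card ?PN \<le> 2 * card (four_cycles ?E)" by simp
  show "a4 ?E \<le> 0" unfolding a4_def using cM cC by linarith
qed


lemma key_arith:
  fixes d k S :: nat
  assumes "d \<ge> 1" "k \<ge> 1" "S \<le> 2 * k" "S \<le> d * k"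
  shows "d * S + k + 1 \<le> 3 * (d * k)"
proof (cases "d = 1")
  case True then show ?thesis using assms by simp
next
  case False
  hence d2: "d \<ge> 2" using assms(1) by simp
  have a: "d * S \<le> d * (2 * k)" using assms(3) by (rule mult_le_mono2)
  have a2: "d * (2 * k) = 2 * (d * k)" by simp
  have b: "2 * k \<le> d * k" using d2 by (rule mult_le_mono1)
  show ?thesis using a a2 b assms(2) by linarith
qed

theorem lemma4p6:
  fixes V :: "'a set" and E :: "'a set set" and n :: nat
  assumes "n \<ge> 6"
    and "sachs4_minimal n (2 * n - 4) V E"
    and "max_degree V E = n - 2"
  shows "is_complete_bipartite 2 (n - 2) V E"
proof -
  have gc: "graph_class n (2 * n - 4) V E"
    and minE: "\<And>V' E'. graph_class n (2 * n - 4) (V' :: 'a set) E' \<Longrightarrow> a4 E \<le> a4 E'"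
    using assms(2) unfolding sachs4_minimal_def by auto
  have sg: "simple_graph V E" and conn: "connected_graph V E" and cV: "card V = n"
    and cE: "card E = 2 * n - 4"
    using gc unfolding graph_class_def by auto
  have finV: "finite V" and edges: "\<forall>e\<in>E. \<exists>x y. x \<in> V \<and> y \<in> V \<and> x \<noteq> y \<and> e = {x, y}"
    using sg unfolding simple_graph_def by auto
  define N0 where "N0 = n - 2"
  have nN0: "n = N0 + 2" using assms(1) unfolding N0_def by simp
  have cE': "card E = 2 * N0" using cE nN0 by simp
  have N0ge: "N0 \<ge> 4" using assms(1) nN0 by simp
  have EV: "\<forall>e\<in>E. e \<subseteq> V"
  proof
    fix e assume "e \<in> E"
    then obtain x y where "x \<in> V" "y \<in> V" "e = {x,y}" using edges by meson
    then show "e \<subseteq> V" by simp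
  qed
  have finE: "finite E"
  proof -
    have "E \<subseteq> Pow V" using EV by blast
    then show ?thesis using finV by (meson finite_Pow_iff finite_subset)
  qed
  have Vne: "V \<noteq> {}" using cV assms(1) by auto
  obtain v where vV: "v \<in> V" and degv: "degree E v = N0"
  proof -
    have "max_degree V E \<in> degree E ` V" unfolding max_degree_def
      using finV Vne by simp
    then show ?thesis using that assms(3) N0_def by auto
  qed
  define N where "N = {x. {v,x} \<in> E}"
  define Ev where "Ev = {e\<in>E. v \<in> e}"
  have cEv: "card Ev = N0" using degv unfolding degree_def Ev_def by simp
  have edge_ne: "\<And>x y. {x,y} \<in> E \<Longrightarrow> x \<noteq> y"
  proof -
    fix x y assume "{x,y} \<in> E"
    then obtain a b where "a \<noteq> b" "{x,y} = {a,b}" using edges by meson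
    then show "x \<noteq> y" by (auto simp: doubleton_eq_iff)
  qed
  have edge_V: "\<And>x y. {x,y} \<in> E \<Longrightarrow> x \<in> V \<and> y \<in> V"
  proof -
    fix x y assume "{x,y} \<in> E"
    hence "{x,y} \<subseteq> V" using EV by (rule bspec[rotated])
    then show "x \<in> V \<and> y \<in> V" by simp
  qed
  have NV: "N \<subseteq> V"
  proof
    fix x assume "x \<in> N" hence "{v,x} \<in> E" by (simp add: N_def)
    then show "x \<in> V" using edge_V by blast
  qed
  have vN: "v \<notin> N"
  proof
    assume "v \<in> N" hence "{v,v} \<in> E" by (simp add: N_def)
    then show False using edge_ne by blast
  qed
  have finN: "finite N" using finV NV by (rule finite_subset[rotated])
  have cN: "card N = N0"
  proof -
    have inj: "inj_on (\<lambda>x. {v,x}) N" by (rule inj_onI) (auto simp: doubleton_eq_iff)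
    have img: "(\<lambda>x. {v,x}) ` N = Ev"
    proof
      show "(\<lambda>x. {v,x}) ` N \<subseteq> Ev" unfolding N_def Ev_def by auto
    next
      show "Ev \<subseteq> (\<lambda>x. {v,x}) ` N"
      proof
        fix e assume "e \<in> Ev"
        hence eE: "e \<in> E" and ve: "v \<in> e" unfolding Ev_def by auto
        then obtain a b where e: "e = {a,b}" using edges by meson
        show "e \<in> (\<lambda>x. {v,x}) ` N"
        proof (cases "v = a")
          case True
          hence "e = {v,b}" using e by simp
          then show ?thesis using eE unfolding N_def by auto
        next
          case False
          hence "v = b" using ve e by auto
          hence "e = {v,a}" using e by auto
          then show ?thesis using eE unfolding N_def by auto
        qed
      qed
    qed
    have "card N = card Ev" using card_image[OF inj] img by simp
    then show ?thesis using cEv by simp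
  qed
  have cVv: "card (V - {v}) = N0 + 1" using cV nN0 vV finV by simp
  have NVv: "N \<subseteq> V - {v}" using NV vN by blast
  have "card ((V - {v}) - N) = 1" using cVv cN NVv finN by (simp add: card_Diff_subset)
  then obtain u where u: "(V - {v}) - N = {u}" by (rule card_1_singletonE)
  have uV: "u \<in> V" and uv: "u \<noteq> v" and uN: "u \<notin> N" using u by blast+
  have Vcases: "\<And>x. x \<in> V \<Longrightarrow> x = v \<or> x = u \<or> x \<in> N" using u by blast
  have Vdec: "V = {v,u} \<union> N" using Vcases vV uV NV by blast
  have vu_notE: "{v,u} \<notin> E" using uN unfolding N_def by simp
  define F where "F = {e\<in>E. v \<notin> e}"
  define H where "H = {e\<in>F. u \<notin> e}"
  define D where "D = {y. {u,y} \<in> E}"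
  define Fu where "Fu = {e\<in>F. u \<in> e}"
  have DN: "D \<subseteq> N"
  proof
    fix y assume "y \<in> D" hence yE: "{u,y} \<in> E" by (simp add: D_def)
    have "y \<in> V" using edge_V[OF yE] by simp
    moreover have "y \<noteq> u" using edge_ne[OF yE] by simp
    moreover have "y \<noteq> v" using yE vu_notE by (auto simp: insert_commute)
    ultimately show "y \<in> N" using Vcases by blast
  qed
  have finD: "finite D" using finN DN by (rule finite_subset[rotated])
  have finF: "finite F" using finE unfolding F_def by simp
  have finH: "finite H" using finF unfolding H_def by simp
  have EvF: "E = Ev \<union> F" "Ev \<inter> F = {}" unfolding Ev_def F_def by blast+
  have cF: "card F = N0"
  proof -
    have "card E = card Ev + card F" using EvF finE by (simp add: card_Un_disjoint)
    then show ?thesis using cE' cEv by simp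
  qed
  have FHu: "F = H \<union> Fu" "H \<inter> Fu = {}" unfolding H_def Fu_def by blast+
  have injFu: "inj_on (\<lambda>y. {u,y}) D" by (rule inj_onI) (auto simp: doubleton_eq_iff)
  have FuImg: "(\<lambda>y. {u,y}) ` D = Fu"
    proof
      show "(\<lambda>y. {u,y}) ` D \<subseteq> Fu"
      proof
        fix e assume "e \<in> (\<lambda>y. {u,y}) ` D"
        then obtain y where y: "y \<in> D" "e = {u,y}" by blast
        have "y \<noteq> v" using y(1) DN vN by blast
        then show "e \<in> Fu" using y uv unfolding Fu_def F_def D_def by auto
      qed
    next
      show "Fu \<subseteq> (\<lambda>y. {u,y}) ` D"
      proof
        fix e assume "e \<in> Fu"
        hence eE: "e \<in> E" and ue: "u \<in> e" unfolding Fu_def F_def by auto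
        then obtain a b where e: "e = {a,b}" using edges by meson
        show "e \<in> (\<lambda>y. {u,y}) ` D"
        proof (cases "u = a")
          case True
          hence "e = {u,b}" using e by simp
          then show ?thesis using eE unfolding D_def by auto
        next
          case False
          hence "u = b" using ue e by auto
          hence "e = {u,a}" using e by auto
          then show ?thesis using eE unfolding D_def by auto
        qed
      qed
    qed
  have cFu: "card Fu = card D" using card_image[OF injFu] FuImg by simp
  define k where "k = card H"
  define d where "d = card D"
  have kd: "k + d = N0"
  proof -
    have "card F = card H + card Fu" using FHu finF by (simp add: card_Un_disjoint)
    then show ?thesis using cF cFu unfolding k_def d_def by simp
  qed
  have Hedge: "\<And>e. e \<in> H \<Longrightarrow> \<exists>x y. x \<in> N \<and> y \<in> N \<and> x \<noteq> y \<and> e = {x,y}"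
  proof -
    fix e assume eH: "e \<in> H"
    hence eE: "e \<in> E" and ve: "v \<notin> e" and ue: "u \<notin> e" unfolding H_def F_def by auto
    then obtain a b where ab: "a \<in> V" "b \<in> V" "a \<noteq> b" "e = {a,b}" using edges by meson
    have "a \<in> N" using Vcases[OF ab(1)] ve ue ab(4) by auto
    moreover have "b \<in> N" using Vcases[OF ab(2)] ve ue ab(4) by auto
    ultimately show "\<exists>x y. x \<in> N \<and> y \<in> N \<and> x \<noteq> y \<and> e = {x,y}" using ab by blast
  qed
  have HV: "\<forall>e\<in>H. e \<subseteq> V" using EV unfolding H_def F_def by blast
  have FV: "\<forall>e\<in>F. e \<subseteq> V" using EV unfolding F_def by blast
  have dpos: "d \<ge> 1"
  proof -
    have "(u, v) \<in> {(x, y). {x, y} \<in> E}\<^sup>*" using conn uV vV unfolding connected_graph_def by blast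
    then obtain y where "(u, y) \<in> {(x, y). {x, y} \<in> E}" using uv
      by (metis converse_rtranclE)
    hence "y \<in> D" unfolding D_def by simp
    hence "D \<noteq> {}" by blast
    then show ?thesis unfolding d_def using finD by (simp add: Suc_le_eq card_gt_0_iff)
  qed
  have Nne: "N \<noteq> {}" using cN N0ge by auto
  note KF = K_facts[OF finV vV uV not_sym[OF uv] NV vN uN Vdec Nne]
  have gK: "graph_class n (2 * n - 4) V (KE v u N)" using KF(1) cN nN0 by simp
  have a4le: "a4 E \<le> 0" using minE[OF gK] KF(2) by simp
  show ?thesis
  proof (cases "k = 0")
    case True
    have H0: "H = {}" using True finH unfolding k_def by simp
    have DeqN: "D = N" using card_subset_eq[OF finN DN] cN kd True unfolding d_def by simp
    have EK: "E = KE v u N"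
    proof
      show "E \<subseteq> KE v u N"
      proof
        fix e assume eE: "e \<in> E"
        show "e \<in> KE v u N"
        proof (cases "v \<in> e")
          case True
          then obtain a b where e: "e = {a,b}" using edges eE by meson
          have "\<exists>x. e = {v,x}"
          proof (cases "v = a")
            case True then show ?thesis using e by blast
          next
            case False then have "v = b" using \<open>v \<in> e\<close> e by auto
            then show ?thesis using e by (auto simp: insert_commute)
          qed
          then obtain x where ex: "e = {v,x}" by blast
          hence "x \<in> N" using eE unfolding N_def by simp
          then show ?thesis unfolding KE_def ex by blast
        next
          case False
          hence "e \<in> F" using eE unfolding F_def by simp
          hence "e \<in> Fu" using H0 FHu by blast
          hence ue: "u \<in> e" unfolding Fu_def by simp
          obtain a b where e: "e = {a,b}" using edges eE by meson
          have "\<exists>x. e = {u,x}"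
          proof (cases "u = a")
            case True then show ?thesis using e by blast
          next
            case False then have "u = b" using ue e by auto
            then show ?thesis using e by (auto simp: insert_commute)
          qed
          then obtain x where ex: "e = {u,x}" by blast
          hence "x \<in> D" using eE unfolding D_def by simp
          hence "x \<in> N" using DeqN by simp
          then show ?thesis unfolding KE_def ex by blast
        qed
      qed
    next
      show "KE v u N \<subseteq> E"
      proof
        fix e assume "e \<in> KE v u N"
        then obtain a b where ab: "a \<in> {v,u}" "b \<in> N" "e = {a,b}" unfolding KE_def by blast
        show "e \<in> E"
        proof (cases "a = v")
          case True then show ?thesis using ab unfolding N_def by simp
        next
          case False
          hence "a = u" using ab(1) by simp
          moreover have "b \<in> D" using ab(2) DeqN by simp
          ultimately show ?thesis using ab unfolding D_def by simp
        qed
      qed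
    qed
    show ?thesis unfolding is_complete_bipartite_def
    proof (intro exI conjI)
      show "{v,u} \<inter> N = {}" using vN uN by blast
      show "{v,u} \<union> N = V" using Vdec by simp
      show "card {v,u} = 2" using uv by simp
      show "card N = n - 2" using cN N0_def by simp
      show "E = {{a, b} |a b. a \<in> {v,u} \<and> b \<in> N}" using EK unfolding KE_def by simp
    qed
  next
    case False
    hence kpos: "k \<ge> 1" by simp
    have "a4 E \<ge> 1"
    proof -
    have Hsimple: "\<forall>e\<in>H. \<exists>x y. x \<noteq> y \<and> e = {x,y}" using Hedge by meson
    have m1: "card {(x,f). {v,x} \<in> E \<and> f \<in> E \<and> v \<notin> f \<and> x \<notin> f} + card (two_matchings F)
         \<le> card (two_matchings E)" unfolding F_def by (rule matchings_split[OF finE])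
    have m2: "card {(x,f). {u,x} \<in> F \<and> f \<in> F \<and> u \<notin> f \<and> x \<notin> f} + card (two_matchings H)
         \<le> card (two_matchings F)" unfolding H_def by (rule matchings_split[OF finF])
    have c1: "card (four_cycles E) \<le> card {C\<in>four_cycles E. \<exists>e\<in>C. v \<in> e} + card (four_cycles F)"
      unfolding F_def by (rule cycles_split[OF finE])
    have c2: "card (four_cycles F) \<le> card {C\<in>four_cycles F. \<exists>e\<in>C. u \<in> e} + card (four_cycles H)"
      unfolding H_def by (rule cycles_split[OF finF])
    have t1: "2 * card {C\<in>four_cycles E. \<exists>e\<in>C. v \<in> e} \<le> card (triples_w E v)"
      by (rule cycles_through[OF finV EV])
    have t2: "2 * card {C\<in>four_cycles F. \<exists>e\<in>C. u \<in> e} \<le> card (triples_w F u)"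
      by (rule cycles_through[OF finV FV])
    have g4: "card (four_cycles H) \<le> card (two_matchings H)"
      by (rule cycles_le_matchings[OF finV HV finH])
    have g5: "card (cherries H) + 2 * card (two_matchings H) \<le> k * k - k"
      unfolding k_def by (rule cherries_matchings[OF finV HV finH Hsimple])
    define Sset where "Sset = {p \<in> D \<times> H. fst p \<in> snd p}"
    define S where "S = card Sset"
    have pa: "card {(x,f). {v,x} \<in> E \<and> f \<in> E \<and> v \<notin> f \<and> x \<notin> f} + (2 * k + d) \<ge> N0 * N0"
    proof -
      let ?Pa = "{(x,f). {v,x} \<in> E \<and> f \<in> E \<and> v \<notin> f \<and> x \<notin> f}"
      let ?Q = "{p \<in> N \<times> F. fst p \<in> snd p}"
      have PaEq: "?Pa = {p \<in> N \<times> F. fst p \<notin> snd p}" unfolding N_def F_def by auto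
      have finNF: "finite (N \<times> F)" using finN finF by simp
      have un: "N \<times> F = {p \<in> N \<times> F. fst p \<notin> snd p} \<union> ?Q" by blast
      have "card (N \<times> F) = card {p \<in> N \<times> F. fst p \<notin> snd p} + card ?Q"
        by (subst un, rule card_Un_disjoint) (use finNF in auto)
      hence cNF: "card ?Pa + card ?Q = N0 * N0" using cN cF PaEq by (simp add: card_cartesian_product)
      have finf: "\<forall>f\<in>F. finite (N \<inter> f)" using finN by simp
      have "?Q \<subseteq> (\<lambda>(f,x). (x,f)) ` (SIGMA f:F. N \<inter> f)" by force
      hence "card ?Q \<le> card ((\<lambda>(f,x). (x,f)) ` (SIGMA f:F. N \<inter> f))"
        by (rule card_mono[rotated]) (use finF finf in simp)
      also have "\<dots> \<le> card (SIGMA f:F. N \<inter> f)" by (rule card_image_le) (use finF finf in simp)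
      also have "\<dots> = (\<Sum>f\<in>F. card (N \<inter> f))" using finF finf by simp
      also have "\<dots> = (\<Sum>f\<in>H. card (N \<inter> f)) + (\<Sum>f\<in>Fu. card (N \<inter> f))"
        unfolding FHu(1) by (rule sum.union_disjoint) (use finF FHu in auto)
      also have "\<dots> \<le> (\<Sum>f\<in>H. 2) + (\<Sum>f\<in>Fu. 1)"
      proof (rule add_mono)
        show "(\<Sum>f\<in>H. card (N \<inter> f)) \<le> (\<Sum>f\<in>H. 2)"
        proof (rule sum_mono)
          fix f assume "f \<in> H"
          then obtain x y where "f = {x,y}" using Hedge by blast
          hence "card (N \<inter> f) \<le> card f" by (simp add: card_mono)
          also have "card f \<le> 2" using \<open>f = {x,y}\<close> card_two_le by simp
          finally show "card (N \<inter> f) \<le> 2" .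
        qed
      next
        show "(\<Sum>f\<in>Fu. card (N \<inter> f)) \<le> (\<Sum>f\<in>Fu. 1)"
        proof (rule sum_mono)
          fix f assume "f \<in> Fu"
          then obtain y where f: "f = {u,y}" using FuImg by blast
          have "N \<inter> f \<subseteq> {y}" using f uN by blast
          hence "card (N \<inter> f) \<le> card {y}" by (rule card_mono[rotated]) simp
          then show "card (N \<inter> f) \<le> 1" by simp
        qed
      qed
      also have "\<dots> = 2 * k + d" unfolding k_def d_def using cFu by simp
      finally have "card ?Q \<le> 2 * k + d" .
      then show ?thesis using cNF by linarith
    qed
    have pu: "card {(x,f). {u,x} \<in> F \<and> f \<in> F \<and> u \<notin> f \<and> x \<notin> f} + S = d * k"
    proof -
      let ?Pu = "{(x,f). {u,x} \<in> F \<and> f \<in> F \<and> u \<notin> f \<and> x \<notin> f}"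
      have xD: "\<And>x. {u,x} \<in> F \<longleftrightarrow> x \<in> D"
      proof -
        fix x
        show "{u,x} \<in> F \<longleftrightarrow> x \<in> D"
        proof
          assume "{u,x} \<in> F" then show "x \<in> D" unfolding F_def D_def by simp
        next
          assume xD: "x \<in> D"
          hence "x \<noteq> v" using DN vN by blast
          then show "{u,x} \<in> F" using xD uv unfolding F_def D_def by auto
        qed
      qed
      have PuEq: "?Pu = {p \<in> D \<times> H. fst p \<notin> snd p}" unfolding H_def using xD by auto
      have finDH: "finite (D \<times> H)" using finD finH by simp
      have un: "D \<times> H = {p \<in> D \<times> H. fst p \<notin> snd p} \<union> Sset" unfolding Sset_def by blast
      have "card (D \<times> H) = card {p \<in> D \<times> H. fst p \<notin> snd p} + card Sset"
        by (subst un, rule card_Un_disjoint) (use finDH in \<open>auto simp: Sset_def\<close>)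
      then show ?thesis using PuEq unfolding S_def d_def k_def by (simp add: card_cartesian_product)
    qed
    have s1: "S \<le> 2 * k"
    proof -
      have finf: "\<forall>f\<in>H. finite f" using HV finV by (meson finite_subset)
      have "Sset \<subseteq> (\<lambda>(f,x). (x,f)) ` (SIGMA f:H. f)" unfolding Sset_def by force
      hence "S \<le> card ((\<lambda>(f,x). (x,f)) ` (SIGMA f:H. f))" unfolding S_def
        by (rule card_mono[rotated]) (use finH finf in simp)
      also have "\<dots> \<le> card (SIGMA f:H. f)" by (rule card_image_le) (use finH finf in simp)
      also have "\<dots> = (\<Sum>f\<in>H. card f)" using finH finf by simp
      also have "\<dots> \<le> (\<Sum>f\<in>H. 2)"
      proof (rule sum_mono)
        fix f assume "f \<in> H"
        then obtain x y where "f = {x,y}" using Hedge by blast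
        then show "card f \<le> 2" using card_two_le by simp
      qed
      also have "\<dots> = 2 * k" unfolding k_def by simp
      finally show ?thesis .
    qed
    have s2: "S \<le> d * k"
    proof -
      have "Sset \<subseteq> D \<times> H" unfolding Sset_def by blast
      hence "S \<le> card (D \<times> H)" unfolding S_def by (rule card_mono[rotated]) (use finD finH in simp)
      then show ?thesis unfolding d_def k_def by (simp add: card_cartesian_product)
    qed
    have tv: "card (triples_w E v) + d \<le> d * d + card (cherries H)"
    proof -
      let ?DD = "{(x,z). x \<in> D \<and> z \<in> D \<and> x \<noteq> z}"
      let ?T1 = "(\<lambda>(x,z). (x,u,z)) ` ?DD"
      have sub: "triples_w E v \<subseteq> ?T1 \<union> cherries H"
      proof
        fix t assume t: "t \<in> triples_w E v"
        obtain x y z where tt: "t = (x,y,z)" by (cases t) auto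
        have h: "x \<noteq> v" "y \<noteq> v" "z \<noteq> v" "x \<noteq> y" "x \<noteq> z" "y \<noteq> z"
          "{v,x} \<in> E" "{x,y} \<in> E" "{y,z} \<in> E" "{z,v} \<in> E"
          using t unfolding tt triples_w_def by simp_all
        have xN: "x \<in> N" using h(7) unfolding N_def by simp
        have zN: "z \<in> N" using h(10) unfolding N_def by (simp add: insert_commute)
        show "t \<in> ?T1 \<union> cherries H"
        proof (cases "y = u")
          case True
          have "x \<in> D" using h(8) True unfolding D_def by (simp add: insert_commute)
          moreover have "z \<in> D" using h(9) True unfolding D_def by simp
          ultimately have "(x,z) \<in> ?DD" using h(5) by simp
          hence "(x,u,z) \<in> ?T1" by (rule rev_image_eqI) simp
          then show ?thesis unfolding tt True by (rule UnI1)
        next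
          case False
          have yV: "y \<in> V" using edge_V[OF h(8)] by simp
          have yN: "y \<in> N" using Vcases[OF yV] False h(2) by blast
          have "{x,y} \<in> H" using h(8) h(1,2) xN yN uN unfolding H_def F_def by auto
          moreover have "{y,z} \<in> H" using h(9) h(2,3) zN yN uN unfolding H_def F_def by auto
          ultimately have "t \<in> cherries H" unfolding tt cherries_def using h(5) by simp
          then show ?thesis by blast
        qed
      qed
      have subDD: "?DD \<subseteq> D \<times> D" by blast
      have finDD: "finite ?DD" using finite_subset[OF subDD] finD by simp
      have finC: "finite (cherries H)" by (rule finite_cherries[OF finV HV])
      have "card (triples_w E v) \<le> card (?T1 \<union> cherries H)"
        using sub by (rule card_mono[rotated]) (use finDD finC in simp)
      also have "\<dots> \<le> card ?T1 + card (cherries H)" by (rule card_Un_le)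
      also have "card ?T1 \<le> card ?DD" by (rule card_image_le[OF finDD])
      also have "card ?DD = d * d - d" unfolding d_def by (rule card_distinct_pairs[OF finD])
      finally have "card (triples_w E v) \<le> d * d - d + card (cherries H)" by simp
      moreover have "d \<le> d * d" using dpos by simp
      ultimately show ?thesis by linarith
    qed
    have tu: "card (triples_w F u) + S \<le> d * S"
    proof -
      let ?h = "\<lambda>(x,y,z). ((x,{x,y}),z)"
      let ?Sig = "SIGMA p:Sset. D - {fst p}"
      have finT: "finite (triples_w F u)" by (rule finite_triples_w[OF finV FV])
      have inj: "inj_on ?h (triples_w F u)"
      proof (rule inj_onI)
        fix p q assume p: "p \<in> triples_w F u" and q: "q \<in> triples_w F u" and eq: "?h p = ?h q"
        obtain x y z where pp: "p = (x,y,z)" by (cases p) auto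
        obtain x' y' z' where qq: "q = (x',y',z')" by (cases q) auto
        have xy: "x \<noteq> y" using p unfolding pp triples_w_def by simp
        from eq have e2: "((x,{x,y}),z) = ((x',{x',y'}),z')" unfolding pp qq by (simp only: prod.case)
        have "x = x'" "{x,y} = {x',y'}" "z = z'" using e2 by (metis prod.inject)+
        hence "y = y'" using xy by (auto simp: doubleton_eq_iff)
        then show "p = q" using \<open>x = x'\<close> \<open>z = z'\<close> pp qq by simp
      qed
      have sub: "?h ` triples_w F u \<subseteq> ?Sig"
      proof
        fix r assume "r \<in> ?h ` triples_w F u"
        then obtain x y z where t: "(x,y,z) \<in> triples_w F u" and r: "r = ((x,{x,y}),z)" by auto
        have h: "x \<noteq> u" "y \<noteq> u" "z \<noteq> u" "x \<noteq> y" "x \<noteq> z" "y \<noteq> z"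
          "{u,x} \<in> F" "{x,y} \<in> F" "{y,z} \<in> F" "{z,u} \<in> F"
          using t unfolding triples_w_def by simp_all
        have xD: "x \<in> D" using h(7) unfolding F_def D_def by simp
        have zD: "z \<in> D" using h(10) unfolding F_def D_def by (simp add: insert_commute)
        have "{x,y} \<in> H" using h(8) h(1,2) unfolding H_def by simp
        hence "(x,{x,y}) \<in> Sset" using xD unfolding Sset_def by simp
        then show "r \<in> ?Sig" unfolding r using zD h(5) by auto
      qed
      have finS: "finite Sset" unfolding Sset_def using finD finH by simp
      have "card (triples_w F u) = card (?h ` triples_w F u)" using inj by (simp add: card_image)
      also have "\<dots> \<le> card ?Sig" using sub by (rule card_mono[rotated]) (use finS finD in simp)
      also have "\<dots> = (\<Sum>p\<in>Sset. card (D - {fst p}))" using finS finD by simp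
      also have "\<dots> = (\<Sum>p\<in>Sset. d - 1)"
      proof (rule sum.cong[OF refl])
        fix p assume "p \<in> Sset" hence "fst p \<in> D" unfolding Sset_def by auto
        then show "card (D - {fst p}) = d - 1" unfolding d_def using finD by simp
      qed
      also have "\<dots> = S * (d - 1)" unfolding S_def by simp
      finally have "card (triples_w F u) \<le> S * (d - 1)" .
      moreover have "S * (d - 1) + S = d * S" using dpos by (cases d) (simp_all add: algebra_simps)
      ultimately show ?thesis by linarith
    qed
    have key: "d * S + k + 1 \<le> 3 * (d * k)" using key_arith[OF dpos kpos s1 s2] .
    have sq: "N0 * N0 = d * d + 2 * (d * k) + k * k" using kd[symmetric] by (simp add: algebra_simps)
    have kk: "k \<le> k * k" using kpos by simp
    have "2 * card (four_cycles E) + 1 \<le> card (two_matchings E)"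
      using m1 m2 c1 c2 t1 t2 g4 g5 pa pu tv tu key sq kk by linarith
    then show "a4 E \<ge> 1" unfolding a4_def by linarith
    qed
    then show ?thesis using a4le by simp
  qed
qed

end
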